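(* Let $d\ge1$. Every $d$-dimensional lattice polytope $P\subseteq\mathbb{R}^d$ with $\mathrm{width}(P)\ge 2\,\mathrm{Flt}(d)\,d$ is spanning.
   Context: A lattice polytope is the convex hull of finitely many points of $\mathbb{Z}^d$. It is spanning if every point of $\mathbb{Z}^d$ is an affine integral combination of lattice points of $P$. $\mathrm{width}(P)=\min_{u\in(\mathbb{Z}^d)^*\setminus\{0\}}\max_{x,y\in P}|u(x)-u(y)|$, and $\mathrm{Flt}(d)=\sup\{\mathrm{width}(K): K\subseteq\mathbb{R}^d \text{ non-empty compact convex}, K\cap\mathbb{Z}^d=\emptyset\}$. *)

theory Defs
  imports "HOL-Analysis.Analysis" "HOL-Library.Extended_Real"
begin

text \<open>The integer lattice Z^d inside R^d = real^'n (d = CARD('n)).\<close>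
definition lattice :: "(real^'n) set" where
  "lattice = {x. \<forall>i. x $ i \<in> \<int>}"

definition lattice_polytope :: "(real^'n) set \<Rightarrow> bool" where
  "lattice_polytope P \<longleftrightarrow> (\<exists>S. finite S \<and> S \<subseteq> lattice \<and> P = convex hull S)"

definition spanning :: "(real^'n) set \<Rightarrow> bool" where
  "spanning P \<longleftrightarrow> (\<forall>z\<in>lattice. \<exists>T c. finite T \<and> T \<subseteq> P \<inter> lattice \<and>
      (\<Sum>x\<in>T. c x) = (1::int) \<and> (\<Sum>x\<in>T. of_int (c x) *\<^sub>R x) = z)"

definition lattice_width :: "(real^'n) set \<Rightarrow> real" where
  "lattice_width K = Inf {Sup {\<bar>u \<bullet> x - u \<bullet> y\<bar> | x y. x \<in> K \<and> y \<in> K} | u.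
       u \<in> lattice \<and> u \<noteq> 0}"

definition Flt :: "'n::finite itself \<Rightarrow> ereal" where
  "Flt _ = Sup {ereal (lattice_width K) | K :: (real^'n) set.
       K \<noteq> {} \<and> compact K \<and> convex K \<and> K \<inter> lattice = {}}"

end

theory Submission
  imports Defs
begin

lemma lattice_add: "x \<in> lattice \<Longrightarrow> y \<in> lattice \<Longrightarrow> x + y \<in> lattice"
  by (auto simp: lattice_def)
lemma lattice_diff: "x \<in> lattice \<Longrightarrow> y \<in> lattice \<Longrightarrow> x - y \<in> lattice"
  by (auto simp: lattice_def)
lemma lattice_zero: "0 \<in> lattice"
  by (auto simp: lattice_def)
lemma lattice_scale: "x \<in> lattice \<Longrightarrow> of_int n *\<^sub>R x \<in> lattice"
  by (auto simp: lattice_def)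
lemma lattice_sum: "finite W \<Longrightarrow> (\<And>w. w \<in> W \<Longrightarrow> f w \<in> lattice) \<Longrightarrow> sum f W \<in> lattice"
  by (induction W rule: finite_induct) (auto simp: lattice_zero lattice_add)

definition acomb :: "(real^'n) set \<Rightarrow> (real^'n) set" where
  "acomb P = {z. \<exists>T c. finite T \<and> T \<subseteq> P \<inter> lattice \<and>
      (\<Sum>x\<in>T. c x) = (1::int) \<and> (\<Sum>x\<in>T. of_int (c x) *\<^sub>R x) = z}"

lemma acomb_base: "x \<in> P \<Longrightarrow> x \<in> lattice \<Longrightarrow> x \<in> acomb P"
  unfolding acomb_def
  by (rule CollectI, rule exI[of _ "{x}"], rule exI[of _ "\<lambda>_. 1"]) auto

lemma sum_restr:
  assumes "finite T" "U \<subseteq> T"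
  shows "(\<Sum>x\<in>T. (if x \<in> U then f x else 0)) = (\<Sum>x\<in>U. f x)"
  using sum.inter_restrict[OF assms(1), of f U] assms(2)
  by (simp add: Int_absorb1)

lemma acomb_aff:
  assumes "a \<in> acomb P" "b \<in> acomb P" "e \<in> acomb P"
  shows "a + b - e \<in> acomb P"
proof -
  obtain Ta ca where a: "finite Ta" "Ta \<subseteq> P \<inter> lattice" "(\<Sum>x\<in>Ta. ca x) = (1::int)"
      "(\<Sum>x\<in>Ta. of_int (ca x) *\<^sub>R x) = a"
    using assms(1) unfolding acomb_def by blast
  obtain Tb cb where b: "finite Tb" "Tb \<subseteq> P \<inter> lattice" "(\<Sum>x\<in>Tb. cb x) = (1::int)"
      "(\<Sum>x\<in>Tb. of_int (cb x) *\<^sub>R x) = b"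
    using assms(2) unfolding acomb_def by blast
  obtain Te ce where e: "finite Te" "Te \<subseteq> P \<inter> lattice" "(\<Sum>x\<in>Te. ce x) = (1::int)"
      "(\<Sum>x\<in>Te. of_int (ce x) *\<^sub>R x) = e"
    using assms(3) unfolding acomb_def by blast
  define T where "T = Ta \<union> Tb \<union> Te"
  define c where "c x = (if x \<in> Ta then ca x else 0) + (if x \<in> Tb then cb x else 0)
      - (if x \<in> Te then ce x else 0)" for x
  have fT: "finite T" using a b e by (simp add: T_def)
  have sub: "Ta \<subseteq> T" "Tb \<subseteq> T" "Te \<subseteq> T" by (auto simp: T_def)
  have "(\<Sum>x\<in>T. c x) = (\<Sum>x\<in>Ta. ca x) + (\<Sum>x\<in>Tb. cb x) - (\<Sum>x\<in>Te. ce x)"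
    unfolding c_def sum.distrib sum_subtractf
    by (simp only: sum_restr[OF fT sub(1), of ca] sum_restr[OF fT sub(2), of cb] sum_restr[OF fT sub(3), of ce])
  hence s1: "(\<Sum>x\<in>T. c x) = 1" using a b e by simp
  have eq: "of_int (c x) *\<^sub>R x = (if x \<in> Ta then of_int (ca x) *\<^sub>R x else 0)
     + (if x \<in> Tb then of_int (cb x) *\<^sub>R x else 0) - (if x \<in> Te then of_int (ce x) *\<^sub>R x else 0)" for x
    by (simp add: c_def scaleR_left_distrib scaleR_left_diff_distrib)
  have "(\<Sum>x\<in>T. of_int (c x) *\<^sub>R x) = a + b - e"
    unfolding eq sum.distrib sum_subtractf
    by (simp only: sum_restr[OF fT sub(1)] sum_restr[OF fT sub(2)] sum_restr[OF fT sub(3)] a b e)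
  moreover have "T \<subseteq> P \<inter> lattice" using a b e by (auto simp: T_def)
  ultimately show ?thesis using fT s1 unfolding acomb_def by blast
qed


lemma G_add:
  assumes "x0 \<in> acomb P" "x0 + g \<in> acomb P" "x0 + h \<in> acomb P"
  shows "x0 + (g + h) \<in> acomb P"
  using acomb_aff[OF assms(2,3,1)] by (simp add: algebra_simps)

lemma G_neg:
  assumes "x0 \<in> acomb P" "x0 + g \<in> acomb P"
  shows "x0 + (- g) \<in> acomb P"
  using acomb_aff[OF assms(1,1,2)] by (simp add: algebra_simps)

lemma G_diff:
  assumes "x0 \<in> acomb P" "x0 + g \<in> acomb P" "x0 + h \<in> acomb P"
  shows "x0 + (g - h) \<in> acomb P"
  using acomb_aff[OF assms(2,1,3)] by (simp add: algebra_simps)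

lemma G_natmul:
  assumes "x0 \<in> acomb P" "x0 + g \<in> acomb P"
  shows "x0 + of_nat n *\<^sub>R g \<in> acomb P"
proof (induction n)
  case 0 then show ?case using assms by simp
next
  case (Suc n)
  have "x0 + (of_nat n *\<^sub>R g + g) \<in> acomb P" using G_add[OF assms(1) Suc assms(2)] .
  then show ?case by (simp add: algebra_simps)
qed

lemma G_intmul:
  assumes "x0 \<in> acomb P" "x0 + g \<in> acomb P"
  shows "x0 + of_int n *\<^sub>R g \<in> acomb P"
proof (cases "n \<ge> 0")
  case True
  define m where "m = nat n"
  have "n = int m" using True by (simp add: m_def)
  then show ?thesis using G_natmul[OF assms, of m] by simp
next
  case False
  define m where "m = nat (- n)"
  have "n = - int m" using False by (simp add: m_def)
  have "x0 + (- (of_nat m *\<^sub>R g)) \<in> acomb P" using G_neg[OF assms(1) G_natmul[OF assms, of m]] .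
  then show ?thesis using \<open>n = - int m\<close> by simp
qed

lemma G_sum:
  assumes "finite W" "x0 \<in> acomb P" "\<And>w. w \<in> W \<Longrightarrow> x0 + w \<in> acomb P"
  shows "x0 + (\<Sum>w\<in>W. of_int (n w) *\<^sub>R w) \<in> acomb P"
  using assms(1,3)
proof (induction W rule: finite_induct)
  case empty then show ?case using assms(2) by simp
next
  case (insert w W)
  have "x0 + (of_int (n w) *\<^sub>R w + (\<Sum>w\<in>W. of_int (n w) *\<^sub>R w)) \<in> acomb P"
    using G_add[OF assms(2) G_intmul[OF assms(2)] insert.IH] insert.prems by auto
  then show ?case using insert.hyps by simp
qed

lemma core:
  fixes P :: "(real^'n) set"
  assumes fW: "finite W" and Wl: "W \<subseteq> lattice" and sW: "span W = UNIV"
    and cW: "real (card W) \<le> 2*k" and k1: "1 \<le> k" and x0P: "x0 \<in> P" and x0l: "x0 \<in> lattice"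
    and comb: "\<And>l. (\<forall>w\<in>W. 0 \<le> l w) \<Longrightarrow> sum l W \<le> k \<Longrightarrow> x0 + (\<Sum>w\<in>W. l w *\<^sub>R w) \<in> P"
  shows "spanning P"
proof -
  have A0: "x0 \<in> acomb P" using acomb_base[OF x0P x0l] .
  have inG: "x0 + v \<in> acomb P" if "v \<in> lattice" "x0 + v \<in> P" for v
    using acomb_base[OF that(2) lattice_add[OF x0l that(1)]] .
  have Wg: "x0 + w \<in> acomb P" if "w \<in> W" for w
  proof -
    let ?l = "\<lambda>v. if v = w then 1 else (0::real)"
    have "sum ?l W = 1" using that fW by (simp add: sum.delta)
    hence "x0 + (\<Sum>v\<in>W. ?l v *\<^sub>R v) \<in> P" using comb[of ?l] k1 by auto
    moreover have "(\<Sum>v\<in>W. ?l v *\<^sub>R v) = (\<Sum>v\<in>W. if v = w then v else 0)"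
      by (rule sum.cong) auto
    moreover have "(\<Sum>v\<in>W. if v = w then v else 0) = w" using that fW
      by (simp add: sum.delta)
    ultimately show ?thesis using inG Wl that by auto
  qed
  have all: "x0 + y \<in> acomb P" if yl: "y \<in> lattice" for y
  proof -
    have "y \<in> span W" using sW by simp
    then obtain u where u: "(\<Sum>w\<in>W. u w *\<^sub>R w) = y"
      using span_finite[OF fW] by auto
    define n where "n w = \<lfloor>u w\<rfloor>" for w
    define l where "l w = u w - of_int (n w)" for w
    have l0: "0 \<le> l w" "l w \<le> 1" for w unfolding l_def n_def by linarith+
    define \<beta> where "\<beta> = (\<Sum>w\<in>W. l w *\<^sub>R w)"
    have yb: "y = \<beta> + (\<Sum>w\<in>W. of_int (n w) *\<^sub>R w)"
      unfolding \<beta>_def u[symmetric] l_def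
      by (simp add: scaleR_left_diff_distrib sum_subtractf)
    have bl: "\<beta> \<in> lattice"
    proof -
      have "\<beta> = y - (\<Sum>w\<in>W. of_int (n w) *\<^sub>R w)" using yb by simp
      then show ?thesis using yl Wl
        by (auto intro!: lattice_diff lattice_sum fW lattice_scale)
    qed
    have bG: "x0 + \<beta> \<in> acomb P"
    proof (cases "sum l W \<le> k")
      case True
      then show ?thesis using comb[of l] l0 inG[OF bl] unfolding \<beta>_def by auto
    next
      case False
      define l' where "l' w = 1 - l w" for w
      have "sum l' W = real (card W) - sum l W" unfolding l'_def by (simp add: sum_subtractf)
      hence s': "sum l' W \<le> k" using False cW by linarith
      define \<beta>' where "\<beta>' = (\<Sum>w\<in>W. l' w *\<^sub>R w)"
      have b': "\<beta>' = (\<Sum>w\<in>W. w) - \<beta>"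
        unfolding \<beta>'_def \<beta>_def l'_def by (simp add: scaleR_left_diff_distrib sum_subtractf)
      have "(\<Sum>w\<in>W. w) \<in> lattice" using Wl by (auto intro!: lattice_sum fW)
      hence b'l: "\<beta>' \<in> lattice" using b' bl lattice_diff by simp
      have "x0 + \<beta>' \<in> P" using comb[of l'] s' l0 unfolding \<beta>'_def l'_def by auto
      hence g1: "x0 + \<beta>' \<in> acomb P" using inG b'l by simp
      have g2: "x0 + (\<Sum>w\<in>W. of_int 1 *\<^sub>R w) \<in> acomb P"
        using G_sum[OF fW A0 Wg, of "\<lambda>_. 1"] by simp
      have "\<beta> = (\<Sum>w\<in>W. of_int 1 *\<^sub>R w) - \<beta>'" using b' by simp
      then show ?thesis using G_diff[OF A0 g2 g1] by simp
    qed
    show ?thesis unfolding yb using G_add[OF A0 bG G_sum[OF fW A0 Wg]] .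
  qed
  show ?thesis unfolding spanning_def
  proof
    fix z :: "real^'n" assume "z \<in> lattice"
    hence "x0 + (z - x0) \<in> acomb P" using all lattice_diff x0l by blast
    then show "\<exists>T c. finite T \<and> T \<subseteq> P \<inter> lattice \<and> sum c T = 1 \<and>
        (\<Sum>x\<in>T. real_of_int (c x) *\<^sub>R x) = z" unfolding acomb_def by simp
  qed
qed


lemma bdd_width_set:
  fixes S :: "(real^'n) set"
  assumes "bounded S"
  shows "bdd_above {\<bar>u \<bullet> x - u \<bullet> y\<bar> | x y. x \<in> S \<and> y \<in> S}"
proof -
  obtain B where B: "\<forall>x\<in>S. norm x \<le> B" using assms bounded_iff by blast
  have "\<bar>u \<bullet> x - u \<bullet> y\<bar> \<le> norm u * (2*B)" if "x \<in> S" "y \<in> S" for x y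
  proof -
    have "\<bar>u \<bullet> x - u \<bullet> y\<bar> = \<bar>u \<bullet> (x - y)\<bar>" by (simp add: inner_diff_right)
    also have "\<dots> \<le> norm u * norm (x - y)" by (rule Cauchy_Schwarz_ineq2)
    also have "\<dots> \<le> norm u * (2*B)"
    proof (rule mult_left_mono)
      have "norm x \<le> B" "norm y \<le> B" using B that by auto
      then show "norm (x - y) \<le> 2*B" using norm_triangle_ineq4[of x y] by linarith
    qed simp
    finally show ?thesis .
  qed
  then show ?thesis unfolding bdd_above_def by blast
qed

lemma exists_nonzero_lattice: "\<exists>u::real^'n. u \<in> lattice \<and> u \<noteq> 0"
proof -
  obtain i :: 'n where True by simp
  have "axis i (1::real) \<in> lattice" by (auto simp: lattice_def axis_def)
  moreover have "axis i (1::real) \<noteq> 0" by (simp add: axis_eq_0_iff)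
  ultimately show ?thesis by blast
qed

lemma width_image_ge:
  fixes S :: "(real^'n) set"
  assumes t: "t > 0" and bS: "bounded S" and ne: "S \<noteq> {}"
  shows "t * lattice_width S \<le> lattice_width ((\<lambda>x. a + t *\<^sub>R x) ` S)"
proof -
  let ?K = "(\<lambda>x. a + t *\<^sub>R x) ` S"
  have bK: "bounded ?K" using bS
    by (metis bounded_scaling bounded_translation image_image)
  let ?SP = "\<lambda>u. Sup {\<bar>u \<bullet> x - u \<bullet> y\<bar> | x y. x \<in> S \<and> y \<in> S}"
  let ?SK = "\<lambda>u. Sup {\<bar>u \<bullet> x - u \<bullet> y\<bar> | x y. x \<in> ?K \<and> y \<in> ?K}"
  have SP0: "0 \<le> ?SP u" for u
  proof -
    obtain x where "x \<in> S" using ne by blast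
    then have "\<bar>u \<bullet> x - u \<bullet> x\<bar> \<le> ?SP u"
      by (intro cSup_upper bdd_width_set[OF bS]) blast
    then show ?thesis by simp
  qed
  have key: "t * ?SP u \<le> ?SK u" for u
  proof -
    have "?SP u \<le> ?SK u / t"
    proof (rule cSup_least)
      show "{\<bar>u \<bullet> x - u \<bullet> y\<bar> | x y. x \<in> S \<and> y \<in> S} \<noteq> {}" using ne by blast
    next
      fix r assume "r \<in> {\<bar>u \<bullet> x - u \<bullet> y\<bar> | x y. x \<in> S \<and> y \<in> S}"
      then obtain x y where xy: "x \<in> S" "y \<in> S" "r = \<bar>u \<bullet> x - u \<bullet> y\<bar>" by blast
      have "\<bar>u \<bullet> (a + t *\<^sub>R x) - u \<bullet> (a + t *\<^sub>R y)\<bar> \<le> ?SK u"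
        by (intro cSup_upper bdd_width_set[OF bK]) (use xy in blast)
      moreover have "\<bar>u \<bullet> (a + t *\<^sub>R x) - u \<bullet> (a + t *\<^sub>R y)\<bar> = t * r"
      proof -
        have "u \<bullet> (a + t *\<^sub>R x) - u \<bullet> (a + t *\<^sub>R y) = t * (u \<bullet> x - u \<bullet> y)"
          by (simp add: inner_add_right right_diff_distrib)
        then show ?thesis using t xy by (simp add: abs_mult)
      qed
      ultimately show "r \<le> ?SK u / t" using t by (simp add: field_simps)
    qed
    then show ?thesis using t by (simp add: field_simps)
  qed
  have "t * lattice_width S \<le> ?SK u" if "u \<in> lattice" "u \<noteq> 0" for u
  proof -
    have "lattice_width S \<le> ?SP u" unfolding lattice_width_def
      by (rule cInf_lower) (use that SP0 in \<open>auto simp: bdd_below_def\<close>)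
    then have "t * lattice_width S \<le> t * ?SP u" using t by simp
    then show ?thesis using key[of u] by linarith
  qed
  note H = this
  show ?thesis unfolding lattice_width_def[of ?K]
  proof (rule cInf_greatest)
    show "{?SK u | u. u \<in> lattice \<and> u \<noteq> 0} \<noteq> {}" using exists_nonzero_lattice by blast
  next
    fix r assume "r \<in> {?SK u | u. u \<in> lattice \<and> u \<noteq> 0}"
    then obtain u where "u \<in> lattice" "u \<noteq> 0" "r = ?SK u" by blast
    then show "t * lattice_width S \<le> r" using H by simp
  qed
qed


lemma free_le_Flt:
  fixes K :: "(real^'n) set"
  assumes "K \<noteq> {}" "compact K" "convex K" "K \<inter> lattice = {}"
  shows "ereal (lattice_width K) \<le> Flt TYPE('n::finite)"
  unfolding Flt_def by (rule Sup_upper) (use assms in blast)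

lemma lattice_norm_ge1:
  fixes u :: "real^'n"
  assumes "u \<in> lattice" "u \<noteq> 0"
  shows "1 \<le> norm u"
proof -
  obtain i where "u $ i \<noteq> 0" using assms(2) by (metis vec_eq_iff zero_index)
  moreover have "u $ i \<in> \<int>" using assms(1) by (simp add: lattice_def)
  ultimately have "1 \<le> \<bar>u $ i\<bar>" by (simp add: Ints_nonzero_abs_ge1)
  then show ?thesis using component_le_norm_cart[of u i] by linarith
qed

lemma Flt_ge: "ereal (1/2) \<le> Flt TYPE('n::finite)"
proof -
  define c :: "real^'n" where "c = (\<chi> i. 1/2)"
  define K where "K = cball c (1/4)"
  have free: "K \<inter> lattice = {}"
  proof (rule ccontr)
    assume "K \<inter> lattice \<noteq> {}"
    then obtain x where x: "x \<in> K" "x \<in> lattice" by blast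
    obtain i :: 'n where True by simp
    have "\<bar>(x - c) $ i\<bar> \<le> norm (x - c)" by (rule component_le_norm_cart)
    also have "\<dots> \<le> 1/4" using x(1) by (simp add: K_def dist_norm norm_minus_commute)
    finally have h: "\<bar>x $ i - 1/2\<bar> \<le> 1/4" by (simp add: c_def)
    have "x $ i \<in> \<int>" using x(2) by (simp add: lattice_def)
    then obtain m :: int where "x $ i = of_int m" by (auto elim: Ints_cases)
    with h have "\<bar>real_of_int m - 1/2\<bar> \<le> 1/4" by simp
    moreover have "real_of_int m \<le> 0 \<or> real_of_int m \<ge> 1" by (cases "m \<le> 0") auto
    ultimately show False by arith
  qed
  have w: "1/2 \<le> lattice_width K"
    unfolding lattice_width_def
  proof (rule cInf_greatest)
    show "{Sup {\<bar>u \<bullet> x - u \<bullet> y\<bar> |x y. x \<in> K \<and> y \<in> K} |u. u \<in> lattice \<and> u \<noteq> 0} \<noteq> {}"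
      using exists_nonzero_lattice by blast
  next
    fix r assume "r \<in> {Sup {\<bar>u \<bullet> x - u \<bullet> y\<bar> |x y. x \<in> K \<and> y \<in> K} |u. u \<in> lattice \<and> u \<noteq> 0}"
    then obtain u where u: "u \<in> lattice" "u \<noteq> 0" "r = Sup {\<bar>u \<bullet> x - u \<bullet> y\<bar> |x y. x \<in> K \<and> y \<in> K}"
      by blast
    have n1: "1 \<le> norm u" using lattice_norm_ge1 u by blast
    define x where "x = c + (1/4 / norm u) *\<^sub>R u"
    define y where "y = c - (1/4 / norm u) *\<^sub>R u"
    have xK: "x \<in> K" using n1 by (simp add: K_def x_def dist_norm)
    have yK: "y \<in> K" using n1 by (simp add: K_def y_def dist_norm)
    have "u \<bullet> x - u \<bullet> y = (1/2 / norm u) * (u \<bullet> u)"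
      by (simp add: x_def y_def inner_add_right inner_diff_right)
    also have "\<dots> = norm u / 2" using n1 by (simp add: dot_square_norm power2_eq_square)
    finally have "\<bar>u \<bullet> x - u \<bullet> y\<bar> = norm u / 2" using n1 by simp
    moreover have "\<bar>u \<bullet> x - u \<bullet> y\<bar> \<le> r" unfolding u(3)
      by (rule cSup_upper) (use xK yK bdd_width_set[of K] in \<open>auto simp: K_def\<close>)
    ultimately show "1/2 \<le> r" using n1 by linarith
  qed
  have "ereal (lattice_width K) \<le> Flt TYPE('n::finite)"
    by (rule free_le_Flt) (auto simp: K_def free[unfolded K_def])
  then show ?thesis using w by (meson ereal_less_eq(3) order_trans)
qed


lemma side_contra:
  fixes P :: "(real^'n::finite) set"
  assumes cP: "compact P" and cvP: "convex P" and x0P: "x0 \<in> P"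
    and dP: "aff_dim P = int CARD('n)" and k: "k > 0"
    and free: "\<And>K :: (real^'n) set. K \<noteq> {} \<Longrightarrow> compact K \<Longrightarrow> convex K \<Longrightarrow> K \<inter> lattice = {} \<Longrightarrow> lattice_width K \<le> f"
    and wP: "lattice_width P * (3/8) / k > f"
    and g0: "g \<noteq> 0" and gS: "\<And>z. z \<in> lattice \<Longrightarrow> x0 + k *\<^sub>R z \<in> P \<Longrightarrow> g \<bullet> z = 0"
    and pP: "p \<in> P" and pmax: "\<And>x. x \<in> P \<Longrightarrow> g \<bullet> x \<le> g \<bullet> p"
    and qP: "q \<in> P" and qmin: "\<And>x. x \<in> P \<Longrightarrow> g \<bullet> q \<le> g \<bullet> x"
    and mid: "2 * (g \<bullet> x0) \<le> g \<bullet> p + g \<bullet> q"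
  shows False
proof (cases "g \<bullet> p \<le> g \<bullet> q")
  case True
  have "P \<subseteq> {x. g \<bullet> x = g \<bullet> q}"
  proof
    fix x assume "x \<in> P"
    then have "g \<bullet> x \<le> g \<bullet> p" "g \<bullet> q \<le> g \<bullet> x" using pmax qmin by auto
    then show "x \<in> {x. g \<bullet> x = g \<bullet> q}" using True by simp
  qed
  hence "aff_dim P \<le> aff_dim {x. g \<bullet> x = g \<bullet> q}" by (rule aff_dim_subset)
  then show False using dP g0 by simp
next
  case False
  define t where "t = 3 / (8*k)"
  define a' where "a' = (5/(8*k)) *\<^sub>R p - (1/k) *\<^sub>R x0"
  define K where "K = (\<lambda>x. a' + t *\<^sub>R x) ` P"
  have t0: "t > 0" using k by (simp add: t_def)
  have Keq: "K = (+) a' ` ((\<lambda>x. t *\<^sub>R x) ` P)" by (simp add: K_def image_image)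
  have Kne: "K \<noteq> {}" using x0P by (auto simp: K_def)
  have Kc: "compact K" unfolding Keq by (intro compact_translation compact_scaling cP)
  have Kcv: "convex K" unfolding Keq by (intro convex_translation convex_scaling cvP)
  have Kfree: "K \<inter> lattice = {}"
  proof (rule ccontr)
    assume "K \<inter> lattice \<noteq> {}"
    then obtain x where x: "x \<in> P" "a' + t *\<^sub>R x \<in> lattice" by (auto simp: K_def)
    define z where "z = a' + t *\<^sub>R x"
    have e1: "k * (5/(8*k)) = 5/8" "k * (1/k) = 1" "k * t = 3/8" using k by (auto simp: t_def)
    have "k *\<^sub>R z = (k * (5/(8*k))) *\<^sub>R p - (k * (1/k)) *\<^sub>R x0 + (k * t) *\<^sub>R x"
      by (simp only: z_def a'_def scaleR_add_right scaleR_diff_right scaleR_scaleR)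
    hence eq: "x0 + k *\<^sub>R z = (5/8) *\<^sub>R p + (3/8) *\<^sub>R x" unfolding e1 by simp
    have "x0 + k *\<^sub>R z \<in> P" unfolding eq
      by (rule convexD[OF cvP pP x(1)]) auto
    hence "g \<bullet> z = 0" using gS x(2) z_def by blast
    hence "g \<bullet> (x0 + k *\<^sub>R z) = g \<bullet> x0" by (simp add: inner_add_right)
    moreover have "g \<bullet> ((5/8) *\<^sub>R p + (3/8) *\<^sub>R x) = (5/8) * (g \<bullet> p) + (3/8) * (g \<bullet> x)"
      by (simp add: inner_add_right)
    moreover have "g \<bullet> q \<le> g \<bullet> x" using qmin x(1) .
    moreover have "g \<bullet> (x0 + k *\<^sub>R z) = g \<bullet> ((5/8) *\<^sub>R p + (3/8) *\<^sub>R x)" using eq by simp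
    ultimately show False using mid False by linarith
  qed
  have "t * lattice_width P \<le> lattice_width K"
    unfolding K_def by (rule width_image_ge[OF t0 compact_imp_bounded[OF cP]]) (use x0P in blast)
  moreover have "t * lattice_width P = lattice_width P * (3/8) / k" by (simp add: t_def)
  moreover have "lattice_width K \<le> f" using free[OF Kne Kc Kcv Kfree] .
  ultimately show False using wP by linarith
qed

lemma span_pts:
  fixes P :: "(real^'n::finite) set"
  assumes cP: "compact P" and cvP: "convex P" and x0P: "x0 \<in> P" and x0l: "x0 \<in> lattice"
    and dP: "aff_dim P = int CARD('n)" and k: "k > 0"
    and free: "\<And>K :: (real^'n) set. K \<noteq> {} \<Longrightarrow> compact K \<Longrightarrow> convex K \<Longrightarrow> K \<inter> lattice = {} \<Longrightarrow> lattice_width K \<le> f"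
    and wP: "lattice_width P * (3/8) / k > f"
  shows "span {z \<in> lattice. x0 + k *\<^sub>R z \<in> P} = UNIV"
proof (rule ccontr)
  let ?S = "{z \<in> lattice. x0 + k *\<^sub>R z \<in> P}"
  assume ns: "span ?S \<noteq> UNIV"
  have "dim ?S \<noteq> DIM(real^'n)" using ns dim_eq_full by blast
  hence "dim ?S < DIM(real^'n)" by (meson dim_subset_UNIV le_neq_implies_less)
  then obtain h :: "real^'n" where h: "h \<noteq> 0" "span ?S \<subseteq> {x. h \<bullet> x = 0}"
    using lowdim_subset_hyperplane by blast
  have hS: "h \<bullet> z = 0" if "z \<in> lattice" "x0 + k *\<^sub>R z \<in> P" for z
  proof -
    have "z \<in> ?S" using that by simp
    hence "z \<in> span ?S" by (rule span_base)
    thus ?thesis using h(2) by auto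
  qed
  have cont: "continuous_on P (\<lambda>x. h \<bullet> x)" "continuous_on P (\<lambda>x. - (h \<bullet> x))"
    by (intro continuous_intros)+
  have Pne: "P \<noteq> {}" using x0P by blast
  obtain p where p1: "p \<in> P" and p2': "\<forall>y\<in>P. h \<bullet> y \<le> h \<bullet> p"
    using continuous_attains_sup[OF cP Pne cont(1)] by blast
  obtain q where q1: "q \<in> P" and q2': "\<forall>y\<in>P. - (h \<bullet> y) \<le> - (h \<bullet> q)"
    using continuous_attains_sup[OF cP Pne cont(2)] by blast
  have p: "p \<in> P" "\<And>x. x \<in> P \<Longrightarrow> h \<bullet> x \<le> h \<bullet> p" using p1 p2' by auto
  have q: "q \<in> P" "\<And>x. x \<in> P \<Longrightarrow> h \<bullet> q \<le> h \<bullet> x" using q1 q2' by auto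
  show False
  proof (cases "2 * (h \<bullet> x0) \<le> h \<bullet> p + h \<bullet> q")
    case True
    show False by (rule side_contra[OF cP cvP x0P dP k free wP h(1) hS p(1) p(2) q(1) q(2) True])
  next
    case False
    have m: "2 * ((- h) \<bullet> x0) \<le> (- h) \<bullet> q + (- h) \<bullet> p" using False by simp
    have n: "- h \<noteq> 0" using h(1) by simp
    have hS': "(- h) \<bullet> z = 0" if "z \<in> lattice" "x0 + k *\<^sub>R z \<in> P" for z
      using hS[OF that] by simp
    have q2: "(- h) \<bullet> x \<le> (- h) \<bullet> q" if "x \<in> P" for x using q(2)[OF that] by simp
    have p2: "(- h) \<bullet> p \<le> (- h) \<bullet> x" if "x \<in> P" for x using p(2)[OF that] by simp
    show False by (rule side_contra[OF cP cvP x0P dP k free wP n hS' q(1) q2 p(1) p2 m])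
  qed
qed


lemma comb_conv:
  fixes P :: "(real^'n) set"
  assumes cvP: "convex P" and x0P: "x0 \<in> P" and fW: "finite W" and k: "k > 0"
    and WP: "\<And>w. w \<in> W \<Longrightarrow> x0 + k *\<^sub>R w \<in> P"
    and l0: "\<forall>w\<in>W. 0 \<le> l w" and ls: "sum l W \<le> k"
  shows "x0 + (\<Sum>w\<in>W. l w *\<^sub>R w) \<in> P"
proof (cases "sum l W = 0")
  case True
  then have "\<forall>w\<in>W. l w = 0" using sum_nonneg_eq_0_iff[OF fW] l0 by blast
  then show ?thesis using x0P by simp
next
  case False
  define s where "s = sum l W"
  have s0: "s > 0" using False l0 sum_nonneg[of W l] unfolding s_def by force
  have "(\<Sum>w\<in>W. (l w / s) *\<^sub>R (x0 + k *\<^sub>R w)) \<in> P"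
  proof (rule convex_sum[OF fW cvP])
    show "(\<Sum>i\<in>W. l i / s) = 1" using s0 by (simp add: s_def flip: sum_divide_distrib)
  qed (use l0 s0 WP in auto)
  moreover have "(\<Sum>w\<in>W. (l w / s) *\<^sub>R (x0 + k *\<^sub>R w)) = x0 + (k / s) *\<^sub>R (\<Sum>w\<in>W. l w *\<^sub>R w)"
  proof -
    have "(\<Sum>w\<in>W. (l w / s) *\<^sub>R (x0 + k *\<^sub>R w)) = (\<Sum>w\<in>W. (l w / s) *\<^sub>R x0) + (\<Sum>w\<in>W. (k / s) *\<^sub>R (l w *\<^sub>R w))"
      by (simp add: scaleR_add_right sum.distrib mult.commute)
    also have "(\<Sum>w\<in>W. (l w / s) *\<^sub>R x0) = (\<Sum>w\<in>W. l w / s) *\<^sub>R x0" by (simp add: scaleR_sum_left)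
    also have "(\<Sum>w\<in>W. l w / s) = 1" using s0 by (simp add: s_def flip: sum_divide_distrib)
    also have "(\<Sum>w\<in>W. (k / s) *\<^sub>R (l w *\<^sub>R w)) = (k / s) *\<^sub>R (\<Sum>w\<in>W. l w *\<^sub>R w)"
      by (simp add: scaleR_sum_right)
    finally show ?thesis by simp
  qed
  ultimately have y: "x0 + (k / s) *\<^sub>R (\<Sum>w\<in>W. l w *\<^sub>R w) \<in> P" by simp
  have "(1 - s/k) *\<^sub>R x0 + (s/k) *\<^sub>R (x0 + (k / s) *\<^sub>R (\<Sum>w\<in>W. l w *\<^sub>R w)) \<in> P"
    by (rule convexD[OF cvP x0P y]) (use s0 k ls s_def in auto)
  moreover have "(1 - s/k) *\<^sub>R x0 + (s/k) *\<^sub>R (x0 + (k / s) *\<^sub>R (\<Sum>w\<in>W. l w *\<^sub>R w))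
      = x0 + (\<Sum>w\<in>W. l w *\<^sub>R w)"
    using s0 k by (simp add: scaleR_add_right scaleR_diff_left)
  ultimately show ?thesis by simp
qed

theorem corollary2p5:
  fixes P :: "(real^'n) set"
  assumes "lattice_polytope P"
    and "aff_dim P = int CARD('n)"
    and "ereal (lattice_width P) \<ge> 2 * Flt TYPE('n) * ereal (real CARD('n))"
  shows "spanning P"
proof -
  obtain S where S: "finite S" "S \<subseteq> lattice" "P = convex hull S"
    using assms(1) unfolding lattice_polytope_def by blast
  have cP: "compact P" using S by (simp add: finite_imp_compact_convex_hull)
  have cvP: "convex P" using S by simp
  have dpos: "0 < CARD('n)" by simp
  have "P \<noteq> {}" using assms(2) by auto
  then have "S \<noteq> {}" using S by auto
  then obtain x0 where x0S: "x0 \<in> S" by blast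
  have x0P: "x0 \<in> P" using S x0S by (simp add: hull_inc)
  have x0l: "x0 \<in> lattice" using S x0S by blast
  have Fge: "ereal (1/2) \<le> Flt TYPE('n)" by (rule Flt_ge)
  obtain f where Ff: "Flt TYPE('n) = ereal f"
  proof (cases "Flt TYPE('n)")
    case (real r) then show ?thesis using that by blast
  next
    case PInf
    then have "2 * Flt TYPE('n) * ereal (real CARD('n)) = \<infinity>" using dpos by simp
    then show ?thesis using assms(3) by simp
  next
    case MInf then show ?thesis using Fge by simp
  qed
  have f2: "1/2 \<le> f" using Fge Ff by simp
  have wge: "2 * f * real CARD('n) \<le> lattice_width P" using assms(3) Ff by simp
  have free: "lattice_width K \<le> f" if "K \<noteq> {}" "compact K" "convex K" "K \<inter> lattice = {}"
    for K :: "(real^'n) set"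
    using free_le_Flt[OF that] Ff by simp
  show ?thesis
  proof (cases "CARD('n) = 1")
    case True
    have "\<exists>x1\<in>S. x1 \<noteq> x0"
    proof (rule ccontr)
      assume "\<not> ?thesis"
      then have "S \<subseteq> {x0}" by blast
      then have "P \<subseteq> {x0}" using S by (simp add: hull_minimal)
      then have "aff_dim P \<le> aff_dim {x0}" by (rule aff_dim_subset)
      then show False using assms(2) by simp
    qed
    then obtain x1 where x1: "x1 \<in> S" "x1 \<noteq> x0" by blast
    have x1P: "x1 \<in> P" using S x1 by (simp add: hull_inc)
    have x1l: "x1 \<in> lattice" using S x1 by blast
    define W where "W = {x1 - x0}"
    have indW: "independent W" using x1 by (simp add: W_def)
    have "dim W = card W" by (rule dim_eq_card_independent[OF indW])
    hence "dim W = DIM(real^'n)" using True by (simp add: W_def)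
    hence sW: "span W = UNIV" using dim_eq_full by blast
    show ?thesis
    proof (rule core[of W 1 x0])
      show "finite W" "W \<subseteq> lattice" using x1l x0l by (auto simp: W_def lattice_diff)
      show "span W = UNIV" by (rule sW)
      show "real (card W) \<le> 2 * 1" by (simp add: W_def)
    next
      fix l :: "real^'n \<Rightarrow> real"
      assume "\<forall>w\<in>W. 0 \<le> l w" "sum l W \<le> 1"
      then have "0 \<le> l (x1 - x0)" "l (x1 - x0) \<le> 1" by (auto simp: W_def)
      then have "(1 - l (x1 - x0)) *\<^sub>R x0 + l (x1 - x0) *\<^sub>R x1 \<in> P"
        by (intro convexD[OF cvP x0P x1P]) auto
      moreover have "(1 - l (x1 - x0)) *\<^sub>R x0 + l (x1 - x0) *\<^sub>R x1 = x0 + (\<Sum>w\<in>W. l w *\<^sub>R w)"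
        by (simp add: W_def algebra_simps)
      ultimately show "x0 + (\<Sum>w\<in>W. l w *\<^sub>R w) \<in> P" by simp
    qed (use x0P x0l in auto)
  next
    case False
    then have d2: "2 \<le> CARD('n)" using dpos by linarith
    define d where "d = real CARD('n)"
    have d2': "2 \<le> d" using d2 unfolding d_def by simp
    define k where "k = d / 2"
    have k1: "1 \<le> k" using d2' by (simp add: k_def)
    have k0: "k > 0" using k1 by simp
    have "lattice_width P * (3/8) / k = 3 * lattice_width P / (4 * d)" by (simp add: k_def)
    also have "\<dots> \<ge> 3 * f / 2" using wge d2' by (simp add: d_def field_simps)
    finally have wP: "lattice_width P * (3/8) / k > f" using f2 by linarith
    let ?S0 = "{z \<in> lattice. x0 + k *\<^sub>R z \<in> P}"
    have sp: "span ?S0 = UNIV" by (rule span_pts[OF cP cvP x0P x0l assms(2) k0 free wP])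
    obtain W where W: "W \<subseteq> ?S0" "independent W" "?S0 \<subseteq> span W"
      using maximal_independent_subset by blast
    have sW: "span W = UNIV"
      using sp W(3) span_mono[OF W(3)] by (simp add: span_span top_unique)
    have fW: "finite W" using W(2) by (rule finiteI_independent)
    have "card W = dim W" using dim_eq_card_independent[OF W(2)] by simp
    also have "\<dots> = dim (span W)" by simp
    also have "\<dots> = CARD('n)" using sW by simp
    finally have cW: "card W = CARD('n)" .
    show ?thesis
    proof (rule core[OF fW _ sW _ k1 x0P x0l])
      show "W \<subseteq> lattice" using W(1) by blast
      show "real (card W) \<le> 2 * k" using cW by (simp add: k_def d_def)
    next
      fix l :: "real^'n \<Rightarrow> real"
      assume "\<forall>w\<in>W. 0 \<le> l w" "sum l W \<le> k"
      then show "x0 + (\<Sum>w\<in>W. l w *\<^sub>R w) \<in> P"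
        using comb_conv[OF cvP x0P fW k0] W(1) by blast
    qed
  qed
qed

end
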